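(* Let $\mathcal{X}$ be a Polish space, $F\colon\mathcal{X}\to\mathbb{R}_+$ measurable, and let $\mathcal{M}_+^F(\mathcal{X})$ be the set of $\sigma$-finite positive measures $\mu$ on $\mathcal{X}$ with $\mu(F^{-1}(0))=0$ and $\mu(\{x:F(x)>\varepsilon\})<\infty$ for all $\varepsilon>0$. Let $\mathcal{Q}\colon\mathcal{X}\to\mathcal{M}_+^F(\mathcal{X})$ be measurable and assume there is $c<1$ such that $\int F(y)\,\mathcal{Q}(x,dy)\le cF(x)$ for every $x\in\mathcal{X}$. For $x\in\mathcal{X}$ let $\mu^{[n]}_x=\sum_{\ell=0}^n\mu^\ell_x$ be the recursive Poisson point process of depth $n$ with kernel $\mathcal{Q}$ started at $x$. Then for every $x\in\mathcal{X}$ there exists a random $\sigma$-finite measure $\mu^{[\infty]}_x$ on $\mathcal{X}$ such that $$\lim_{n\to\infty}\mathbf{E}\int F(y)\,\bigl(\mu^{[\infty]}_x-\mu^{[n]}_x\bigr)(dy)=0.$$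
   Context: Recursive Poisson point process: set $\mu^0_x=\delta_x$ and, for $n\ge1$, let $\mu^n_x$ be, conditionally on $\mu^0_x,\dots,\mu^{n-1}_x$, a Poisson point process (random integer-valued $\sigma$-finite measure) on $\mathcal{X}$ with intensity measure $\int_{\mathcal{X}}\mathcal{Q}(y,\cdot)\,\mu^{n-1}_x(dy)$; then $\mu^{[n]}_x=\sum_{\ell=0}^n\mu^\ell_x$. *)

theory Defs
  imports "HOL-Probability.Probability"
begin

text \<open>Poisson probability of the value m for parameter lam in [0,\<infinity>];
  a Poisson variable of parameter \<infinity> equals \<infinity> a.s., so every finite value has probability 0.\<close>
definition poisson_prob :: "ennreal \<Rightarrow> nat \<Rightarrow> ennreal" where
  "poisson_prob lam m =
     (if lam = \<top> then 0
      else ennreal (exp (- enn2real lam) * enn2real lam ^ m / fact m))"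

definition random_measure :: "'w measure \<Rightarrow> ('w \<Rightarrow> 'a::topological_space measure) \<Rightarrow> bool" where
  "random_measure M N \<longleftrightarrow>
     (\<forall>w\<in>space M. sets (N w) = sets borel) \<and>
     (\<forall>A\<in>sets borel. (\<lambda>w. emeasure (N w) A) \<in> borel_measurable M)"

text \<open>Conditionally on the events in G, N is a Poisson point process (random integer-valued
  sigma-finite measure) with random intensity measure Lam (given by its values on Borel sets):
  for disjoint Borel sets A_0..A_{k-1}, naturals m_i and B in G,
  P(B \<inter> {N(A_i) = m_i for all i}) = E[1_B * prod_i Poisson(Lam(A_i))(m_i)].\<close>
definition cond_poisson_pp ::
  "'w measure \<Rightarrow> 'w set set \<Rightarrow> ('w \<Rightarrow> 'a::topological_space measure) \<Rightarrow> ('w \<Rightarrow> 'a set \<Rightarrow> ennreal) \<Rightarrow> bool" where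
  "cond_poisson_pp M G N Lam \<longleftrightarrow>
     random_measure M N \<and>
     (\<forall>w\<in>space M. sigma_finite_measure (N w) \<and>
        (\<forall>A\<in>sets borel. emeasure (N w) A \<in> range of_nat \<union> {\<top>})) \<and>
     (\<forall>(k::nat) (As::nat \<Rightarrow> 'a set) (ms::nat \<Rightarrow> nat) B.
        B \<in> G \<longrightarrow> (\<forall>i<k. As i \<in> sets borel) \<longrightarrow> disjoint_family_on As {..<k} \<longrightarrow>
        emeasure M (B \<inter> {w\<in>space M. \<forall>i<k. emeasure (N w) (As i) = of_nat (ms i)}) =
        (\<integral>\<^sup>+ w. indicator B w * (\<Prod>i<k. poisson_prob (Lam w (As i)) (ms i)) \<partial>M))"

definition hist_sigma :: "'w measure \<Rightarrow> (nat \<Rightarrow> 'w \<Rightarrow> 'a::topological_space measure) \<Rightarrow> nat \<Rightarrow> 'w set set" where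
  "hist_sigma M \<mu> n = sigma_sets (space M)
     {(\<lambda>w. emeasure (\<mu> l w) A) -` S \<inter> space M | l A S. l < n \<and> A \<in> sets borel \<and> S \<in> sets borel}"

definition recursive_ppp ::
  "'w measure \<Rightarrow> ('a::topological_space \<Rightarrow> 'a measure) \<Rightarrow> 'a \<Rightarrow> (nat \<Rightarrow> 'w \<Rightarrow> 'a measure) \<Rightarrow> bool" where
  "recursive_ppp M Q x \<mu> \<longleftrightarrow>
     (\<forall>w\<in>space M. \<mu> 0 w = return borel x) \<and>
     (\<forall>n. cond_poisson_pp M (hist_sigma M \<mu> (Suc n)) (\<mu> (Suc n))
            (\<lambda>w A. \<integral>\<^sup>+ y. emeasure (Q y) A \<partial>(\<mu> n w)))"

definition MF :: "('a::topological_space \<Rightarrow> real) \<Rightarrow> 'a measure set" where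
  "MF F = {m. sets m = sets borel \<and> sigma_finite_measure m \<and>
              emeasure m (F -` {0}) = 0 \<and>
              (\<forall>e>0. emeasure m {y. F y > e} < \<top>)}"

end

theory Submission
  imports Defs
begin


definition summ :: "(nat \<Rightarrow> 'a::topological_space measure) \<Rightarrow> 'a measure" where
  "summ N = measure_of UNIV (sets borel) (\<lambda>A. \<Sum>l. emeasure (N l) A)"

lemma ennreal_suminf_swap:
  fixes f :: "nat \<Rightarrow> nat \<Rightarrow> ennreal"
  shows "(\<Sum>i. \<Sum>l. f l i) = (\<Sum>l. \<Sum>i. f l i)"
proof -
  have "(\<Sum>i. \<Sum>l. f l i) = (\<integral>\<^sup>+i. (\<Sum>l. f l i) \<partial>count_space UNIV)"
    by (simp add: nn_integral_count_space_nat)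
  also have "\<dots> = (\<Sum>l. \<integral>\<^sup>+i. f l i \<partial>count_space UNIV)"
    by (rule nn_integral_suminf) auto
  also have "\<dots> = (\<Sum>l. \<Sum>i. f l i)"
    by (simp add: nn_integral_count_space_nat)
  finally show ?thesis .
qed

lemma summ:
  assumes N: "\<And>l. sets (N l) = sets borel"
  shows "sets (summ N) = sets borel"
    and "A \<in> sets borel \<Longrightarrow> emeasure (summ N) A = (\<Sum>l. emeasure (N l) A)"
proof -
  have sa: "sigma_algebra UNIV (sets (borel::'a measure))"
    using sets.sigma_algebra_axioms[of "borel::'a measure"] by simp
  show "sets (summ N) = sets borel"
    unfolding summ_def
    by (subst sets_measure_of) (auto simp: sigma_algebra.sigma_sets_eq[OF sa])
  assume A: "A \<in> sets borel"
  have ca: "countably_additive (sets borel) (\<lambda>A. \<Sum>l. emeasure (N l) A)"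
  proof (rule countably_additiveI)
    fix B :: "nat \<Rightarrow> 'a set"
    assume B: "range B \<subseteq> sets borel" "disjoint_family B" "\<Union> (range B) \<in> sets borel"
    have "(\<Sum>i. \<Sum>l. emeasure (N l) (B i)) = (\<Sum>l. \<Sum>i. emeasure (N l) (B i))"
      by (rule ennreal_suminf_swap)
    also have "\<dots> = (\<Sum>l. emeasure (N l) (\<Union>i. B i))"
      using B N by (intro suminf_cong suminf_emeasure) auto
    finally show "(\<Sum>i. \<Sum>l. emeasure (N l) (B i)) = (\<Sum>l. emeasure (N l) (\<Union> (range B)))" .
  qed
  have pos: "positive (sets borel) (\<lambda>A. \<Sum>l. emeasure (N l) A)"
    by (simp add: positive_def)
  show "emeasure (summ N) A = (\<Sum>l. emeasure (N l) A)"
    unfolding summ_def by (rule emeasure_measure_of_sigma[OF sa pos ca A])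
qed


lemma bm_transfer: "sets A = sets B \<Longrightarrow> f \<in> borel_measurable B \<Longrightarrow> f \<in> borel_measurable A"
  using measurable_cong_sets[of A B borel borel] by simp

lemma kernel_nn_meas:
  fixes N :: "'w \<Rightarrow> 'a::topological_space measure"
  assumes N: "\<And>w. w \<in> space M \<Longrightarrow> sets (N w) = sets borel"
    and Nm: "\<And>A. A \<in> sets borel \<Longrightarrow> (\<lambda>w. emeasure (N w) A) \<in> borel_measurable M"
    and g: "g \<in> borel_measurable borel"
  shows "(\<lambda>w. \<integral>\<^sup>+y. g y \<partial>N w) \<in> borel_measurable M"
  using g
proof (induction rule: borel_measurable_induct)
  case (cong f g)
  then have "f = g" by auto
  then show ?case using cong by simp
next
  case (set A)
  have eq: "(\<integral>\<^sup>+y. indicator A y \<partial>N w) = emeasure (N w) A" if w: "w \<in> space M" for w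
  proof -
    have "A \<in> sets (N w)" using N[OF w] set by simp
    then show ?thesis by simp
  qed
  show ?case by (rule measurable_cong[OF eq, THEN iffD2]) (simp_all add: Nm set)
next
  case (mult u c)
  have eq: "(\<integral>\<^sup>+y. c * u y \<partial>N w) = c * (\<integral>\<^sup>+y. u y \<partial>N w)" if w: "w \<in> space M" for w
  proof -
    have "u \<in> borel_measurable (N w)" by (rule bm_transfer[OF N[OF w] \<open>u \<in> borel_measurable borel\<close>])
    then show ?thesis by (rule nn_integral_cmult)
  qed
  show ?case by (rule measurable_cong[OF eq, THEN iffD2]) (use mult in simp_all)
next
  case (add u v)
  have eq: "(\<integral>\<^sup>+y. v y + u y \<partial>N w) = (\<integral>\<^sup>+y. v y \<partial>N w) + (\<integral>\<^sup>+y. u y \<partial>N w)" if w: "w \<in> space M" for w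
  proof -
    have "u \<in> borel_measurable (N w)" "v \<in> borel_measurable (N w)"
      by (rule bm_transfer[OF N[OF w] \<open>u \<in> borel_measurable borel\<close>], rule bm_transfer[OF N[OF w] \<open>v \<in> borel_measurable borel\<close>])
    then show ?thesis by (intro nn_integral_add)
  qed
  show ?case by (rule measurable_cong[OF eq, THEN iffD2]) (use add in simp_all)
next
  case (seq U)
  have eq: "(\<integral>\<^sup>+y. (SUP i. U i) y \<partial>N w) = (SUP i. \<integral>\<^sup>+y. U i y \<partial>N w)" if w: "w \<in> space M" for w
  proof -
    have "\<And>i. U i \<in> borel_measurable (N w)"
      by (rule bm_transfer[OF N[OF w] seq(1)])
    then show ?thesis unfolding SUP_apply
      by (intro nn_integral_monotone_convergence_SUP \<open>incseq U\<close>)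
  qed
  show ?case by (rule measurable_cong[OF eq, THEN iffD2]) (use seq in \<open>simp_all add: borel_measurable_SUP\<close>)
qed



lemma nn_integral_summ:
  assumes N: "\<And>l. sets (N l) = sets borel"
    and g: "g \<in> borel_measurable borel"
  shows "(\<integral>\<^sup>+y. g y \<partial>summ N) = (\<Sum>l. \<integral>\<^sup>+y. g y \<partial>N l)"
  using g
proof (induction rule: borel_measurable_induct)
  case (cong f g)
  then have "f = g" by auto
  then show ?case using cong by simp
next
  case (set A)
  have "A \<in> sets (summ N)" "\<And>l. A \<in> sets (N l)" using summ(1)[OF N] N set by auto
  then show ?case using summ(2)[OF N set] by simp
next
  case (mult u c)
  have m1: "u \<in> borel_measurable (summ N)" by (rule bm_transfer[OF summ(1)[OF N] \<open>u \<in> borel_measurable borel\<close>])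
  have m2: "\<And>l. u \<in> borel_measurable (N l)" by (rule bm_transfer[OF N \<open>u \<in> borel_measurable borel\<close>])
  have "(\<integral>\<^sup>+y. c * u y \<partial>summ N) = c * (\<integral>\<^sup>+y. u y \<partial>summ N)"
    using m1 by (rule nn_integral_cmult)
  moreover have "\<And>l. (\<integral>\<^sup>+y. c * u y \<partial>N l) = c * (\<integral>\<^sup>+y. u y \<partial>N l)"
    using m2 by (rule nn_integral_cmult)
  ultimately show ?case using mult by simp
next
  case (add u v)
  have m1: "u \<in> borel_measurable (summ N)" "v \<in> borel_measurable (summ N)"
    by (rule bm_transfer[OF summ(1)[OF N] \<open>u \<in> borel_measurable borel\<close>], rule bm_transfer[OF summ(1)[OF N] \<open>v \<in> borel_measurable borel\<close>])
  have m2: "\<And>l. u \<in> borel_measurable (N l)" "\<And>l. v \<in> borel_measurable (N l)"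
    by (rule bm_transfer[OF N \<open>u \<in> borel_measurable borel\<close>], rule bm_transfer[OF N \<open>v \<in> borel_measurable borel\<close>])
  have "(\<integral>\<^sup>+y. v y + u y \<partial>summ N) = (\<integral>\<^sup>+y. v y \<partial>summ N) + (\<integral>\<^sup>+y. u y \<partial>summ N)"
    using m1 by (intro nn_integral_add)
  moreover have "\<And>l. (\<integral>\<^sup>+y. v y + u y \<partial>N l) = (\<integral>\<^sup>+y. v y \<partial>N l) + (\<integral>\<^sup>+y. u y \<partial>N l)"
    using m2 by (intro nn_integral_add)
  moreover have "(\<Sum>l. (\<integral>\<^sup>+y. v y \<partial>N l) + (\<integral>\<^sup>+y. u y \<partial>N l)) =
      (\<Sum>l. (\<integral>\<^sup>+y. v y \<partial>N l)) + (\<Sum>l. (\<integral>\<^sup>+y. u y \<partial>N l))"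
    by (rule suminf_add[symmetric]) auto
  ultimately show ?case using add by simp
next
  case (seq U)
  have m1: "\<And>i. U i \<in> borel_measurable (summ N)" by (rule bm_transfer[OF summ(1)[OF N] seq(1)])
  have m2: "\<And>i l. U i \<in> borel_measurable (N l)" by (rule bm_transfer[OF N seq(1)])
  have "(\<integral>\<^sup>+y. (SUP i. U i) y \<partial>summ N) = (SUP i. \<integral>\<^sup>+y. U i y \<partial>summ N)"
    unfolding SUP_apply by (intro nn_integral_monotone_convergence_SUP \<open>incseq U\<close> m1)
  moreover have "\<And>l. (\<integral>\<^sup>+y. (SUP i. U i) y \<partial>N l) = (SUP i. \<integral>\<^sup>+y. U i y \<partial>N l)"
    unfolding SUP_apply by (intro nn_integral_monotone_convergence_SUP \<open>incseq U\<close> m2)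
  moreover have "(\<Sum>l. SUP i. \<integral>\<^sup>+y. U i y \<partial>N l) = (SUP i. \<Sum>l. \<integral>\<^sup>+y. U i y \<partial>N l)"
  proof (rule ennreal_suminf_SUP_eq)
    fix l show "incseq (\<lambda>i. \<integral>\<^sup>+y. U i y \<partial>N l)"
      using \<open>incseq U\<close> by (intro monoI nn_integral_mono) (auto simp: incseq_def le_fun_def)
  qed
  ultimately show ?case using seq by simp
qed



lemma poisson_sums:
  fixes l :: real assumes l: "l \<ge> 0"
  shows "(\<lambda>m. exp (- l) * l ^ m / fact m) sums 1"
    and "(\<lambda>m. real m * (exp (- l) * l ^ m / fact m)) sums l"
proof -
  have e: "(\<lambda>m. l ^ m / fact m) sums exp l"
    using exp_converges[of l] by (simp add: divide_inverse mult.commute)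
  have "(\<lambda>m. exp (- l) * (l ^ m / fact m)) sums (exp (- l) * exp l)"
    by (rule sums_mult[OF e])
  then show s1: "(\<lambda>m. exp (- l) * l ^ m / fact m) sums 1"
    by (simp add: exp_minus field_simps)
  have h: "(\<lambda>m. real (Suc m) * (exp (- l) * l ^ Suc m / fact (Suc m))) = (\<lambda>m. l * (exp (- l) * l ^ m / fact m))"
  proof (rule ext)
    fix m
    have f: "fact (Suc m) = real (Suc m) * (fact m :: real)" by simp
    have p: "real (Suc m) > 0" "(fact m :: real) > 0" by auto
    have "real (Suc m) * (exp (- l) * l ^ Suc m / fact (Suc m))
        = real (Suc m) * (l * (exp (- l) * l ^ m)) / (real (Suc m) * fact m)"
      unfolding f power_Suc by (simp add: mult_ac)
    also have "\<dots> = l * (exp (- l) * l ^ m) / fact m"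
      using p by (subst mult_divide_mult_cancel_left) auto
    finally show "real (Suc m) * (exp (- l) * l ^ Suc m / fact (Suc m)) = l * (exp (- l) * l ^ m / fact m)" by simp
  qed
  have "(\<lambda>m. l * (exp (- l) * l ^ m / fact m)) sums (l * 1)"
    by (rule sums_mult[OF s1])
  then have "(\<lambda>m. real (Suc m) * (exp (- l) * l ^ Suc m / fact (Suc m))) sums l"
    unfolding h by simp
  then show "(\<lambda>m. real m * (exp (- l) * l ^ m / fact m)) sums l"
    by (subst (asm) sums_Suc_iff) simp
qed

lemma poisson_prob_sums:
  assumes L: "L \<noteq> \<top>"
  shows "(\<Sum>m. poisson_prob L m) = 1"
    and "(\<Sum>m. of_nat m * poisson_prob L m) = L"
proof -
  define l where "l = enn2real L"
  have l0: "l \<ge> 0" and Ll: "L = ennreal l" using L by (auto simp: l_def ennreal_enn2real_if)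
  have pp: "poisson_prob L m = ennreal (exp (- l) * l ^ m / fact m)" for m
    using L by (simp add: poisson_prob_def l_def)
  note s = poisson_sums[OF l0]
  show "(\<Sum>m. poisson_prob L m) = 1"
    unfolding pp using s(1) l0
    by (subst suminf_ennreal2) (auto simp: sums_iff)
  have eqm: "of_nat m * poisson_prob L m = ennreal (real m * (exp (- l) * l ^ m / fact m))" for m
    unfolding pp ennreal_mult'[of "real m", OF of_nat_0_le_iff] ennreal_of_nat_eq_real_of_nat ..
  then show "(\<Sum>m. of_nat m * poisson_prob L m) = L"
    unfolding eqm using s(2) l0 Ll by (subst suminf_ennreal2) (auto simp: sums_iff)
qed

lemma poisson_prob_meas[measurable]:
  assumes [measurable]: "f \<in> borel_measurable M"
  shows "(\<lambda>w. poisson_prob (f w) m) \<in> borel_measurable M"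
  unfolding poisson_prob_def by measurable



lemma poisson_mean:
  assumes M: "prob_space M" and P: "cond_poisson_pp M G N Lam" and G: "space M \<in> G"
    and A: "A \<in> sets borel" and Lm: "(\<lambda>w. Lam w A) \<in> borel_measurable M"
  shows "(\<integral>\<^sup>+w. emeasure (N w) A \<partial>M) \<le> (\<integral>\<^sup>+w. Lam w A \<partial>M)"
proof -
  interpret prob_space M by fact
  define X where "X w = emeasure (N w) A" for w
  define L where "L w = Lam w A" for w
  have Xm[measurable]: "X \<in> borel_measurable M"
    using P A unfolding cond_poisson_pp_def random_measure_def X_def[abs_def] by auto
  have Lm'[measurable]: "L \<in> borel_measurable M" using Lm unfolding L_def[abs_def] .
  have Xv: "\<And>w. w \<in> space M \<Longrightarrow> X w \<in> range of_nat \<union> {\<top>}"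
    using P A unfolding cond_poisson_pp_def X_def by auto
  have H: "\<forall>(k::nat) (As::nat \<Rightarrow> _ set) (ms::nat \<Rightarrow> nat) B.
        B \<in> G \<longrightarrow> (\<forall>i<k. As i \<in> sets borel) \<longrightarrow> disjoint_family_on As {..<k} \<longrightarrow>
        emeasure M (B \<inter> {w\<in>space M. \<forall>i<k. emeasure (N w) (As i) = of_nat (ms i)}) =
        (\<integral>\<^sup>+ w. indicator B w * (\<Prod>i<k. poisson_prob (Lam w (As i)) (ms i)) \<partial>M)"
    using P unfolding cond_poisson_pp_def by blast
  define S where "S m = {w\<in>space M. X w = of_nat m}" for m
  have Sm[measurable]: "S m \<in> sets M" for m unfolding S_def by measurable
  have pm: "emeasure M (S m) = (\<integral>\<^sup>+w. poisson_prob (L w) m \<partial>M)" for m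
  proof -
    have "emeasure M (space M \<inter> {w\<in>space M. emeasure (N w) A = of_nat m}) =
        (\<integral>\<^sup>+ w. indicator (space M) w * poisson_prob (Lam w A) m \<partial>M)"
      using H[rule_format, where B="space M" and k=1 and As="\<lambda>_. A" and ms="\<lambda>_. m"] G A
      by (simp add: disjoint_family_on_def)
    also have "\<dots> = (\<integral>\<^sup>+w. poisson_prob (L w) m \<partial>M)"
      by (intro nn_integral_cong) (simp add: L_def)
    moreover have "space M \<inter> {w\<in>space M. emeasure (N w) A = of_nat m} = S m"
      by (auto simp: S_def X_def)
    ultimately show ?thesis by simp
  qed
  show ?thesis
  proof (cases "emeasure M {w\<in>space M. L w = \<top>} = 0")
    case False
    have "(\<integral>\<^sup>+w. \<top> * indicator {w\<in>space M. L w = \<top>} w \<partial>M) \<le> (\<integral>\<^sup>+w. L w \<partial>M)"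
      by (intro nn_integral_mono) (auto split: split_indicator)
    moreover have "(\<integral>\<^sup>+w. \<top> * indicator {w\<in>space M. L w = \<top>} w \<partial>M) = \<top>"
      using False by (subst nn_integral_cmult_indicator) auto
    ultimately have "(\<integral>\<^sup>+w. L w \<partial>M) = \<top>" by (simp add: top_unique)
    then show ?thesis by (simp add: L_def)
  next
    case True
    have AEL: "AE w in M. L w \<noteq> \<top>"
      by (rule AE_I[OF _ True]) auto
    have tot: "(\<Sum>m. emeasure M (S m)) = 1"
    proof -
      have "(\<Sum>m. emeasure M (S m)) = (\<Sum>m. \<integral>\<^sup>+w. poisson_prob (L w) m \<partial>M)" by (simp add: pm)
      also have "\<dots> = (\<integral>\<^sup>+w. (\<Sum>m. poisson_prob (L w) m) \<partial>M)"
        by (rule nn_integral_suminf[symmetric]) measurable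
      also have "\<dots> = (\<integral>\<^sup>+w. 1 \<partial>M)"
        using AEL by (intro nn_integral_cong_AE) (auto elim!: AE_mp simp: poisson_prob_sums)
      also have "\<dots> = 1" by (simp add: emeasure_space_1)
      finally show ?thesis .
    qed
    have inf0: "emeasure M {w\<in>space M. X w = \<top>} = 0"
    proof -
      have sp: "space M = {w\<in>space M. X w = \<top>} \<union> (\<Union>m. S m)"
        using Xv unfolding S_def by auto
      have dj: "disjoint_family S" unfolding disjoint_family_on_def S_def by auto
      have "emeasure M {w\<in>space M. X w = \<top>} + emeasure M (\<Union>m. S m) = emeasure M (space M)"
        by (subst sp, rule plus_emeasure) (auto simp: S_def)
      also have "emeasure M (\<Union>m. S m) = 1"
        using tot suminf_emeasure[of S M] dj Sm by (auto simp: image_subset_iff)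
      finally have "emeasure M {w\<in>space M. X w = \<top>} + 1 = 0 + 1"
        by (simp add: emeasure_space_1)
      then show ?thesis by (subst (asm) add.commute, subst (asm) (2) add.commute, subst (asm) ennreal_add_left_cancel) auto
    qed
    have AEX: "AE w in M. X w \<noteq> \<top>"
      by (rule AE_I[OF _ inf0]) auto
    have pw: "X w = (\<Sum>m. of_nat m * indicator (S m) w)" if w: "w \<in> space M" "X w \<noteq> \<top>" for w
    proof -
      obtain k where k: "X w = of_nat k" using Xv[OF w(1)] w(2) by auto
      have "(\<Sum>m. of_nat m * indicator (S m) w) = (\<Sum>m\<in>{k}. of_nat m * indicator (S m) w :: ennreal)"
        by (rule suminf_finite) (use k w in \<open>auto simp: S_def\<close>)
      also have "\<dots> = of_nat k" using k w by (simp add: S_def)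
      finally show ?thesis using k by simp
    qed
    have "(\<integral>\<^sup>+w. emeasure (N w) A \<partial>M) = (\<integral>\<^sup>+w. X w \<partial>M)" by (simp add: X_def)
    also have "\<dots> = (\<integral>\<^sup>+w. (\<Sum>m. of_nat m * indicator (S m) w) \<partial>M)"
      proof (rule nn_integral_cong_AE)
      show "AE w in M. X w = (\<Sum>m. of_nat m * indicator (S m) w)"
        using AEX AE_space by eventually_elim (rule pw)
    qed
    also have "\<dots> = (\<Sum>m. \<integral>\<^sup>+w. of_nat m * indicator (S m) w \<partial>M)"
      by (rule nn_integral_suminf) measurable
    also have "\<dots> = (\<Sum>m. of_nat m * emeasure M (S m))"
      by (simp add: nn_integral_cmult_indicator)
    also have "\<dots> = (\<Sum>m. \<integral>\<^sup>+w. of_nat m * poisson_prob (L w) m \<partial>M)"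
      by (simp add: pm nn_integral_cmult)
    also have "\<dots> = (\<integral>\<^sup>+w. (\<Sum>m. of_nat m * poisson_prob (L w) m) \<partial>M)"
      by (rule nn_integral_suminf[symmetric]) measurable
    also have "\<dots> = (\<integral>\<^sup>+w. L w \<partial>M)"
      using AEL by (intro nn_integral_cong_AE) (auto elim!: AE_mp simp: poisson_prob_sums)
    finally show ?thesis by (simp add: L_def)
  qed
qed



lemma step:
  fixes Q :: "'a::topological_space \<Rightarrow> 'a measure"
  assumes M: "prob_space M"
    and P: "cond_poisson_pp M G N (\<lambda>w A. \<integral>\<^sup>+y. emeasure (Q y) A \<partial>K w)"
    and G: "space M \<in> G"
    and K: "random_measure M K"
    and Qs: "\<And>y. sets (Q y) = sets borel"
    and Qm: "\<And>A. A \<in> sets borel \<Longrightarrow> (\<lambda>y. emeasure (Q y) A) \<in> borel_measurable borel"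
    and g: "g \<in> borel_measurable borel"
  shows "(\<integral>\<^sup>+w. (\<integral>\<^sup>+y. g y \<partial>N w) \<partial>M) \<le> (\<integral>\<^sup>+w. (\<integral>\<^sup>+y. (\<integral>\<^sup>+z. g z \<partial>Q y) \<partial>K w) \<partial>M)"
proof -
  have Nr: "random_measure M N" using P unfolding cond_poisson_pp_def by auto
  have Ns: "\<And>w. w \<in> space M \<Longrightarrow> sets (N w) = sets borel"
    and Nm: "\<And>A. A \<in> sets borel \<Longrightarrow> (\<lambda>w. emeasure (N w) A) \<in> borel_measurable M"
    using Nr unfolding random_measure_def by auto
  have Ks: "\<And>w. w \<in> space M \<Longrightarrow> sets (K w) = sets borel"
    and Km: "\<And>A. A \<in> sets borel \<Longrightarrow> (\<lambda>w. emeasure (K w) A) \<in> borel_measurable M"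
    using K unfolding random_measure_def by auto
  have mN: "(\<lambda>w. \<integral>\<^sup>+y. h y \<partial>N w) \<in> borel_measurable M" if "h \<in> borel_measurable borel" for h
    by (rule kernel_nn_meas[OF Ns Nm that])
  have mK: "(\<lambda>w. \<integral>\<^sup>+y. h y \<partial>K w) \<in> borel_measurable M" if "h \<in> borel_measurable borel" for h
    by (rule kernel_nn_meas[OF Ks Km that])
  have mQ: "(\<lambda>y. \<integral>\<^sup>+z. h z \<partial>Q y) \<in> borel_measurable borel" if "h \<in> borel_measurable borel" for h
    by (rule kernel_nn_meas[OF Qs Qm that])
  have bN: "h \<in> borel_measurable (N w)" if "w \<in> space M" "h \<in> borel_measurable borel" for h w
    by (rule bm_transfer[OF Ns[OF that(1)] that(2)])
  have bK: "h \<in> borel_measurable (K w)" if "w \<in> space M" "h \<in> borel_measurable borel" for h w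
    by (rule bm_transfer[OF Ks[OF that(1)] that(2)])
  have bQ: "h \<in> borel_measurable (Q y)" if "h \<in> borel_measurable borel" for h y
    by (rule bm_transfer[OF Qs that])
  define I where "I h = (\<integral>\<^sup>+w. (\<integral>\<^sup>+y. h y \<partial>N w) \<partial>M)" for h
  define J where "J h = (\<integral>\<^sup>+w. (\<integral>\<^sup>+y. (\<integral>\<^sup>+z. h z \<partial>Q y) \<partial>K w) \<partial>M)" for h
  have "I g \<le> J g"
    using g
  proof (induction rule: borel_measurable_induct)
    case (cong f g)
    then have "f = g" by auto
    then show ?case using cong by simp
  next
    case (set A)
    have "I (indicator A) = (\<integral>\<^sup>+w. emeasure (N w) A \<partial>M)"
      unfolding I_def using Ns set by (intro nn_integral_cong) simp
    also have "\<dots> \<le> (\<integral>\<^sup>+w. (\<integral>\<^sup>+y. emeasure (Q y) A \<partial>K w) \<partial>M)"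
      by (rule poisson_mean[OF M P G set]) (rule mK[OF Qm[OF set]])
    also have "\<dots> = J (indicator A)"
      unfolding J_def using Qs set by simp
    finally show ?case .
  next
    case (mult u c)
    note um = \<open>u \<in> borel_measurable borel\<close>
    have "I (\<lambda>x. c * u x) = (\<integral>\<^sup>+w. c * (\<integral>\<^sup>+y. u y \<partial>N w) \<partial>M)"
      unfolding I_def by (intro nn_integral_cong nn_integral_cmult bN um) 
    also have "\<dots> = c * I u" unfolding I_def by (rule nn_integral_cmult[OF mN[OF um]])
    also have "\<dots> \<le> c * J u" using \<open>I u \<le> J u\<close> by (rule mult_left_mono) simp
    also have "c * J u = (\<integral>\<^sup>+w. c * (\<integral>\<^sup>+y. (\<integral>\<^sup>+z. u z \<partial>Q y) \<partial>K w) \<partial>M)"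
      unfolding J_def by (rule nn_integral_cmult[symmetric, OF mK[OF mQ[OF um]]])
    also have "\<dots> = (\<integral>\<^sup>+w. (\<integral>\<^sup>+y. c * (\<integral>\<^sup>+z. u z \<partial>Q y) \<partial>K w) \<partial>M)"
      by (intro nn_integral_cong nn_integral_cmult[symmetric] bK mQ um)
    also have "\<dots> = J (\<lambda>x. c * u x)"
      unfolding J_def by (intro nn_integral_cong nn_integral_cmult[symmetric] bQ um)
    finally show ?case .
  next
    case (add u v)
    note um = \<open>u \<in> borel_measurable borel\<close> and vm = \<open>v \<in> borel_measurable borel\<close>
    have "I (\<lambda>x. v x + u x) = (\<integral>\<^sup>+w. (\<integral>\<^sup>+y. v y \<partial>N w) + (\<integral>\<^sup>+y. u y \<partial>N w) \<partial>M)"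
      unfolding I_def by (intro nn_integral_cong nn_integral_add bN um vm)
    also have "\<dots> = I v + I u" unfolding I_def by (rule nn_integral_add[OF mN[OF vm] mN[OF um]])
    also have "\<dots> \<le> J v + J u" using \<open>I u \<le> J u\<close> \<open>I v \<le> J v\<close> by (rule add_mono[rotated])
    also have "J v + J u = (\<integral>\<^sup>+w. (\<integral>\<^sup>+y. (\<integral>\<^sup>+z. v z \<partial>Q y) \<partial>K w) + (\<integral>\<^sup>+y. (\<integral>\<^sup>+z. u z \<partial>Q y) \<partial>K w) \<partial>M)"
      unfolding J_def by (rule nn_integral_add[symmetric, OF mK[OF mQ[OF vm]] mK[OF mQ[OF um]]])
    also have "\<dots> = (\<integral>\<^sup>+w. (\<integral>\<^sup>+y. (\<integral>\<^sup>+z. v z \<partial>Q y) + (\<integral>\<^sup>+z. u z \<partial>Q y) \<partial>K w) \<partial>M)"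
      by (intro nn_integral_cong nn_integral_add[symmetric] bK mQ um vm)
    also have "\<dots> = J (\<lambda>x. v x + u x)"
      unfolding J_def by (intro nn_integral_cong nn_integral_add[symmetric] bQ um vm)
    finally show ?case .
  next
    case (seq U)
    note Um = \<open>\<And>i. U i \<in> borel_measurable borel\<close>
    note inc = \<open>incseq U\<close>
    have incN: "incseq (\<lambda>i w. \<integral>\<^sup>+y. U i y \<partial>N w)"
      using inc by (auto simp: incseq_def le_fun_def intro!: nn_integral_mono)
    have incQ: "incseq (\<lambda>i y. \<integral>\<^sup>+z. U i z \<partial>Q y)"
      using inc by (auto simp: incseq_def le_fun_def intro!: nn_integral_mono)
    have incK: "incseq (\<lambda>i w. \<integral>\<^sup>+y. (\<integral>\<^sup>+z. U i z \<partial>Q y) \<partial>K w)"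
      using inc by (auto simp: incseq_def le_fun_def intro!: nn_integral_mono)
    have "I (SUP i. U i) = (\<integral>\<^sup>+w. (SUP i. \<integral>\<^sup>+y. U i y \<partial>N w) \<partial>M)"
      unfolding I_def SUP_apply
      by (intro nn_integral_cong nn_integral_monotone_convergence_SUP inc bN Um)
    also have "\<dots> = (SUP i. I (U i))"
      unfolding I_def by (rule nn_integral_monotone_convergence_SUP[OF incN mN[OF Um]])
    also have "\<dots> \<le> (SUP i. J (U i))"
      by (rule SUP_mono') (rule seq)
    also have "\<dots> = (\<integral>\<^sup>+w. (SUP i. \<integral>\<^sup>+y. (\<integral>\<^sup>+z. U i z \<partial>Q y) \<partial>K w) \<partial>M)"
      unfolding J_def by (rule nn_integral_monotone_convergence_SUP[symmetric, OF incK mK[OF mQ[OF Um]]])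
    also have "\<dots> = (\<integral>\<^sup>+w. (\<integral>\<^sup>+y. (SUP i. \<integral>\<^sup>+z. U i z \<partial>Q y) \<partial>K w) \<partial>M)"
      by (intro nn_integral_cong nn_integral_monotone_convergence_SUP[symmetric] incQ bK mQ Um)
    also have "\<dots> = J (SUP i. U i)"
      unfolding J_def SUP_apply
      by (intro nn_integral_cong nn_integral_monotone_convergence_SUP[symmetric] inc bQ Um)
    finally show ?case .
  qed
  then show ?thesis unfolding I_def J_def .
qed



theorem lemma2p7:
  fixes F :: "'a::polish_space \<Rightarrow> real"
    and Q :: "'a \<Rightarrow> 'a measure"
    and c :: real
  assumes F_meas: "F \<in> borel_measurable borel"
    and F_nonneg: "\<And>x. F x \<ge> 0"
    and Q_MF: "\<And>x. Q x \<in> MF F"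
    and Q_meas: "\<And>A. A \<in> sets borel \<Longrightarrow> (\<lambda>x. emeasure (Q x) A) \<in> borel_measurable borel"
    and c_lt: "c < 1"
    and contr: "\<And>x. (\<integral>\<^sup>+ y. ennreal (F y) \<partial>Q x) \<le> ennreal (c * F x)"
  shows "\<forall>x. \<forall>(M::'w measure) (\<mu>::nat \<Rightarrow> 'w \<Rightarrow> 'a measure).
           prob_space M \<longrightarrow> recursive_ppp M Q x \<mu> \<longrightarrow>
           (\<exists>\<mu>inf \<nu>. random_measure M \<mu>inf \<and>
              (\<forall>w\<in>space M. sigma_finite_measure (\<mu>inf w)) \<and>
              (\<forall>n. random_measure M (\<nu> n)) \<and>
              (\<forall>n. AE w in M. \<forall>A\<in>sets borel.
                   emeasure (\<mu>inf w) A = (\<Sum>l\<le>n. emeasure (\<mu> l w) A) + emeasure (\<nu> n w) A) \<and>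
              (\<lambda>n. \<integral>\<^sup>+ w. (\<integral>\<^sup>+ y. ennreal (F y) \<partial>(\<nu> n w)) \<partial>M) \<longlonglongrightarrow> 0)"
proof (intro allI impI)
  fix x and M :: "'w measure" and \<mu> :: "nat \<Rightarrow> 'w \<Rightarrow> 'a measure"
  assume M: "prob_space M" and R: "recursive_ppp M Q x \<mu>"
  interpret prob_space M by fact
  have mu0: "\<And>w. w \<in> space M \<Longrightarrow> \<mu> 0 w = return borel x"
    using R unfolding recursive_ppp_def by auto
  have CP: "\<And>n. cond_poisson_pp M (hist_sigma M \<mu> (Suc n)) (\<mu> (Suc n)) (\<lambda>w A. \<integral>\<^sup>+y. emeasure (Q y) A \<partial>\<mu> n w)"
    using R unfolding recursive_ppp_def by auto
  have G: "\<And>n. space M \<in> hist_sigma M \<mu> n" unfolding hist_sigma_def by (rule sigma_sets_top)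
  have rm: "random_measure M (\<mu> l)" for l
  proof (cases l)
    case 0
    have "(\<lambda>w. emeasure (\<mu> 0 w) A) \<in> borel_measurable M" if A: "A \<in> sets borel" for A
    proof -
      have "(\<lambda>w. indicator A x :: ennreal) \<in> borel_measurable M" by simp
      then show ?thesis
        by (rule measurable_cong[THEN iffD1, rotated]) (use mu0 A in simp)
    qed
    then show ?thesis using 0 mu0 unfolding random_measure_def by auto
  next
    case (Suc n)
    then show ?thesis using CP[of n] unfolding cond_poisson_pp_def by auto
  qed
  have ms: "\<And>l w. w \<in> space M \<Longrightarrow> sets (\<mu> l w) = sets borel"
    and mm: "\<And>l A. A \<in> sets borel \<Longrightarrow> (\<lambda>w. emeasure (\<mu> l w) A) \<in> borel_measurable M"
    using rm unfolding random_measure_def by auto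
  have Qs: "\<And>y. sets (Q y) = sets borel" using Q_MF unfolding MF_def by auto
  have st: "(\<integral>\<^sup>+w. (\<integral>\<^sup>+y. g y \<partial>\<mu> (Suc l) w) \<partial>M) \<le> (\<integral>\<^sup>+w. (\<integral>\<^sup>+y. (\<integral>\<^sup>+z. g z \<partial>Q y) \<partial>\<mu> l w) \<partial>M)"
    if "g \<in> borel_measurable borel" for g l
    by (rule step[OF M CP G rm Qs Q_meas that])
  have Fm: "(\<lambda>y. ennreal (F y)) \<in> borel_measurable borel" using F_meas by simp
  have mF[measurable]: "(\<lambda>w. \<integral>\<^sup>+y. ennreal (F y) \<partial>\<mu> l w) \<in> borel_measurable M" for l
    by (rule kernel_nn_meas[OF ms mm Fm])
  define c' where "c' = max c 0"
  have c'0: "c' \<ge> 0" and c'1: "c' < 1" using c_lt by (auto simp: c'_def)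
  have Qc: "(\<integral>\<^sup>+z. ennreal (F z) \<partial>Q y) \<le> ennreal c' * ennreal (F y)" for y
  proof -
    have "c * F y \<le> c' * F y" using F_nonneg[of y] by (intro mult_right_mono) (auto simp: c'_def)
    then have "ennreal (c * F y) \<le> ennreal (c' * F y)" by (rule ennreal_leI)
    then have "(\<integral>\<^sup>+z. ennreal (F z) \<partial>Q y) \<le> ennreal (c' * F y)"
      using contr[of y] by (rule order_trans[rotated])
    then show ?thesis by (simp only: ennreal_mult'[OF c'0])
  qed
  define a where "a l = (\<integral>\<^sup>+w. (\<integral>\<^sup>+y. ennreal (F y) \<partial>\<mu> l w) \<partial>M)" for l
  have a0: "a 0 = ennreal (F x)"
  proof -
    have "a 0 = (\<integral>\<^sup>+w. ennreal (F x) \<partial>M)"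
      unfolding a_def using mu0 Fm by (intro nn_integral_cong) (simp add: nn_integral_return)
    then show ?thesis by (simp add: emeasure_space_1)
  qed
  have aS: "a (Suc l) \<le> ennreal c' * a l" for l
  proof -
    have "a (Suc l) \<le> (\<integral>\<^sup>+w. (\<integral>\<^sup>+y. (\<integral>\<^sup>+z. ennreal (F z) \<partial>Q y) \<partial>\<mu> l w) \<partial>M)"
      unfolding a_def by (rule st[OF Fm])
    also have "\<dots> \<le> (\<integral>\<^sup>+w. (\<integral>\<^sup>+y. ennreal c' * ennreal (F y) \<partial>\<mu> l w) \<partial>M)"
      by (intro nn_integral_mono Qc)
    also have "\<dots> = (\<integral>\<^sup>+w. ennreal c' * (\<integral>\<^sup>+y. ennreal (F y) \<partial>\<mu> l w) \<partial>M)"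
      by (intro nn_integral_cong nn_integral_cmult bm_transfer[OF ms Fm])
    also have "\<dots> = ennreal c' * a l"
      unfolding a_def by (rule nn_integral_cmult) (rule mF)
    finally show ?thesis .
  qed
  have ab: "a l \<le> ennreal (c' ^ l * F x)" for l
  proof (induction l)
    case 0 then show ?case by (simp add: a0)
  next
    case (Suc l)
    have "a (Suc l) \<le> ennreal c' * a l" by (rule aS)
    also have "\<dots> \<le> ennreal c' * ennreal (c' ^ l * F x)" by (rule mult_left_mono[OF Suc]) simp
    also have "\<dots> = ennreal (c' ^ Suc l * F x)"
      using c'0 by (simp add: ennreal_mult'[symmetric] mult.assoc)
    finally show ?case .
  qed
  define S where "S = (\<Sum>l. c' ^ l * F x)"
  have summ_geo: "summable (\<lambda>l. c' ^ l * F x)"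
    using c'0 c'1 by (intro summable_mult2 summable_geometric) simp
  have tail: "(\<Sum>l. ennreal (c' ^ (l + k) * F x)) = ennreal (c' ^ k * S)" for k
  proof -
    have "(\<Sum>l. ennreal (c' ^ (l + k) * F x)) = (\<Sum>l. ennreal (c' ^ k) * ennreal (c' ^ l * F x))"
      using c'0 F_nonneg[of x]
      by (intro suminf_cong) (simp add: ennreal_mult[symmetric] power_add mult_ac)
    also have "\<dots> = ennreal (c' ^ k) * ennreal S"
      using c'0 F_nonneg[of x] summ_geo unfolding S_def
      by (subst ennreal_suminf_cmult) (subst suminf_ennreal2, auto)
    also have "\<dots> = ennreal (c' ^ k * S)" using c'0 by (simp only: ennreal_mult'[symmetric] zero_le_power)
    finally show ?thesis .
  qed
  have atail: "(\<Sum>l. a (l + k)) \<le> ennreal (c' ^ k * S)" for k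
    unfolding tail[symmetric] by (intro suminf_le ab) auto
  define Z where "Z = F -` {0}"
  have Zs: "Z \<in> sets borel" unfolding Z_def using measurable_sets[OF F_meas, of "{0}"] by simp
  have z: "(\<integral>\<^sup>+w. emeasure (\<mu> (Suc l) w) Z \<partial>M) = 0" for l
  proof -
    have im: "indicator Z \<in> borel_measurable borel" using Zs by simp
    have "(\<integral>\<^sup>+w. emeasure (\<mu> (Suc l) w) Z \<partial>M) = (\<integral>\<^sup>+w. (\<integral>\<^sup>+y. indicator Z y \<partial>\<mu> (Suc l) w) \<partial>M)"
      using ms Zs by (intro nn_integral_cong) simp
    also have "\<dots> \<le> (\<integral>\<^sup>+w. (\<integral>\<^sup>+y. (\<integral>\<^sup>+z. indicator Z z \<partial>Q y) \<partial>\<mu> l w) \<partial>M)"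
      by (rule st[OF im])
    also have "\<dots> = 0"
      using Qs Zs Q_MF unfolding MF_def Z_def by simp
    finally show ?thesis by simp
  qed
  have AEz: "AE w in M. \<forall>l. emeasure (\<mu> (Suc l) w) Z = 0"
    unfolding AE_all_countable
  proof
    fix l show "AE w in M. emeasure (\<mu> (Suc l) w) Z = 0"
      using z[of l] mm[OF Zs] by (subst (asm) nn_integral_0_iff_AE) auto
  qed
  have sumF_m[measurable]: "(\<lambda>w. \<Sum>l. \<integral>\<^sup>+y. ennreal (F y) \<partial>\<mu> l w) \<in> borel_measurable M"
    by measurable
  have "(\<integral>\<^sup>+w. (\<Sum>l. \<integral>\<^sup>+y. ennreal (F y) \<partial>\<mu> l w) \<partial>M) = (\<Sum>l. a l)"
    unfolding a_def by (rule nn_integral_suminf) (rule mF)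
  also have "\<dots> \<le> ennreal (c' ^ 0 * S)" using atail[of 0] by simp
  finally have "(\<integral>\<^sup>+w. (\<Sum>l. \<integral>\<^sup>+y. ennreal (F y) \<partial>\<mu> l w) \<partial>M) \<noteq> \<top>"
    by (rule neq_top_trans[OF ennreal_neq_top])
  then have AEs: "AE w in M. (\<Sum>l. \<integral>\<^sup>+y. ennreal (F y) \<partial>\<mu> l w) \<noteq> \<top>"
    using nn_integral_PInf_AE[OF sumF_m] by (simp add: infinity_ennreal_def)
  define Gd where "Gd = {w\<in>space M. (\<Sum>l. \<integral>\<^sup>+y. ennreal (F y) \<partial>\<mu> l w) \<noteq> \<top> \<and> (\<forall>l. emeasure (\<mu> (Suc l) w) Z = 0)}"
  have mmZ[measurable]: "(\<lambda>w. emeasure (\<mu> l w) Z) \<in> borel_measurable M" for l by (rule mm[OF Zs])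
  have Gds[measurable]: "Gd \<in> sets M" unfolding Gd_def by measurable
  have AEG: "AE w in M. w \<in> Gd"
    using AEs AEz AE_space by eventually_elim (auto simp: Gd_def)
  define T where "T k w = (if w \<in> Gd then summ (\<lambda>l. \<mu> (l + k) w) else null_measure borel)" for k w
  have Tsets: "sets (T k w) = sets borel" if "w \<in> space M" for k w
    using summ(1)[of "\<lambda>l. \<mu> (l + k) w"] ms that by (auto simp: T_def Gd_def)
  have Tem: "emeasure (T k w) A = (\<Sum>l. emeasure (\<mu> (l + k) w) A)" if "w \<in> Gd" "A \<in> sets borel" for k w A
    using summ(2)[of "\<lambda>l. \<mu> (l + k) w" A] ms that by (auto simp: T_def Gd_def)
  have Trm: "random_measure M (T k)" for k
    unfolding random_measure_def
  proof (intro conjI ballI)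
    fix w assume "w \<in> space M" then show "sets (T k w) = sets borel" by (rule Tsets)
  next
    fix A :: "'a set" assume A: "A \<in> sets borel"
    have "(\<lambda>w. if w \<in> Gd then (\<Sum>l. emeasure (\<mu> (l + k) w) A) else 0) \<in> borel_measurable M"
      using mm[OF A] by (intro measurable_If_set borel_measurable_suminf) auto
    then show "(\<lambda>w. emeasure (T k w) A) \<in> borel_measurable M"
    proof (rule measurable_cong[THEN iffD1, rotated])
      fix w assume "w \<in> space M"
      show "(if w \<in> Gd then (\<Sum>l. emeasure (\<mu> (l + k) w) A) else 0) = emeasure (T k w) A"
        by (cases "w \<in> Gd") (simp add: Tem A, simp add: T_def)
    qed
  qed
  have Tsf: "sigma_finite_measure (T 0 w)" if w: "w \<in> space M" for w
  proof (cases "w \<in> Gd")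
    case False
    then show ?thesis unfolding sigma_finite_measure_def T_def
      by (intro exI[of _ "{UNIV}"]) auto
  next
    case True
    define B where "B k = {y. F y > inverse (real (Suc k))}" for k
    have Bs: "B k \<in> sets borel" for k unfolding B_def using F_meas by measurable
    have cover: "\<Union> (insert Z (range B)) = UNIV"
    proof (intro set_eqI iffI)
      fix y :: 'a
      show "y \<in> \<Union> (insert Z (range B))"
      proof (cases "F y = 0")
        case True then show ?thesis by (simp add: Z_def)
      next
        case False
        then have "F y > 0" using F_nonneg[of y] by simp
        then obtain k where "inverse (real (Suc k)) < F y" using reals_Archimedean by blast
        then show ?thesis by (auto simp: B_def)
      qed
    qed simp
    have fZ: "emeasure (T 0 w) Z \<noteq> \<top>"
    proof -
      have "emeasure (T 0 w) Z = (\<Sum>l. emeasure (\<mu> l w) Z)" using Tem[OF True Zs] by simp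
      also have "\<dots> = (\<Sum>l\<in>{0}. emeasure (\<mu> l w) Z)"
      proof (rule suminf_finite)
        fix l :: nat assume "l \<notin> {0}"
        then obtain m where "l = Suc m" by (cases l) auto
        then show "emeasure (\<mu> l w) Z = 0" using True by (simp add: Gd_def)
      qed simp
      also have "\<dots> = indicator Z x" using mu0[OF w] Zs by simp
      finally show ?thesis by (simp split: split_indicator)
    qed
    have fB: "emeasure (T 0 w) (B k) \<noteq> \<top>" for k
    proof -
      define e where "e = inverse (real (Suc k))"
      have e0: "e > 0" by (simp add: e_def)
      have "ennreal e * emeasure (\<mu> l w) (B k) \<le> (\<integral>\<^sup>+y. ennreal (F y) \<partial>\<mu> l w)" for l
      proof -
        have "ennreal e * emeasure (\<mu> l w) (B k) = (\<integral>\<^sup>+y. ennreal e * indicator (B k) y \<partial>\<mu> l w)"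
          using ms[OF w] Bs by (simp add: nn_integral_cmult_indicator)
        also have "\<dots> \<le> (\<integral>\<^sup>+y. ennreal (F y) \<partial>\<mu> l w)"
          by (intro nn_integral_mono) (auto simp: B_def e_def split: split_indicator intro!: ennreal_leI)
        finally show ?thesis .
      qed
      then have "(\<Sum>l. ennreal e * emeasure (\<mu> l w) (B k)) \<le> (\<Sum>l. \<integral>\<^sup>+y. ennreal (F y) \<partial>\<mu> l w)"
        by (intro suminf_le) auto
      also have "\<dots> < \<top>" using True by (simp add: Gd_def top.not_eq_extremum)
      finally have "ennreal e * (\<Sum>l. emeasure (\<mu> l w) (B k)) < \<top>" by simp
      then have "(\<Sum>l. emeasure (\<mu> l w) (B k)) \<noteq> \<top>" using e0 by (auto simp: ennreal_mult_less_top)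
      then show ?thesis using Tem[OF True Bs] by simp
    qed
    show ?thesis unfolding sigma_finite_measure_def
    proof (intro exI[of _ "insert Z (range B)"] conjI)
      show "countable (insert Z (range B))" by simp
      show "insert Z (range B) \<subseteq> sets (T 0 w)" using Tsets[OF w] Zs Bs by auto
      show "\<Union> (insert Z (range B)) = space (T 0 w)"
        using cover Tsets[OF w] by (metis sets_eq_imp_space_eq space_borel)
      show "\<forall>a\<in>insert Z (range B). emeasure (T 0 w) a \<noteq> \<infinity>" using fZ fB by auto
    qed
  qed
  have eqs: "AE w in M. \<forall>A\<in>sets borel.
      emeasure (T 0 w) A = (\<Sum>l\<le>n. emeasure (\<mu> l w) A) + emeasure (T (Suc n) w) A" for n
    using AEG
  proof eventually_elim
    case (elim w)
    show ?case
    proof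
      fix A :: "'a set" assume A: "A \<in> sets borel"
      have "(\<Sum>l. emeasure (\<mu> l w) A) = (\<Sum>l. emeasure (\<mu> (l + Suc n) w) A) + (\<Sum>l<Suc n. emeasure (\<mu> l w) A)"
        by (rule suminf_offset) simp
      then show "emeasure (T 0 w) A = (\<Sum>l\<le>n. emeasure (\<mu> l w) A) + emeasure (T (Suc n) w) A"
        using Tem[OF elim A] by (simp add: lessThan_Suc_atMost add.commute)
    qed
  qed
  have lim: "(\<lambda>n. \<integral>\<^sup>+ w. (\<integral>\<^sup>+ y. ennreal (F y) \<partial>(T (Suc n) w)) \<partial>M) \<longlonglongrightarrow> 0"
  proof (rule tendsto_sandwich[of "\<lambda>_. 0" _ _ "\<lambda>n. ennreal (c' ^ Suc n * S)"])
    show "\<forall>\<^sub>F n in sequentially. 0 \<le> (\<integral>\<^sup>+ w. (\<integral>\<^sup>+ y. ennreal (F y) \<partial>(T (Suc n) w)) \<partial>M)" by simp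
    show "\<forall>\<^sub>F n in sequentially. (\<integral>\<^sup>+ w. (\<integral>\<^sup>+ y. ennreal (F y) \<partial>(T (Suc n) w)) \<partial>M) \<le> ennreal (c' ^ Suc n * S)"
    proof (intro always_eventually allI)
      fix n
      have "(\<integral>\<^sup>+ w. (\<integral>\<^sup>+ y. ennreal (F y) \<partial>(T (Suc n) w)) \<partial>M) \<le> (\<integral>\<^sup>+ w. (\<Sum>l. \<integral>\<^sup>+y. ennreal (F y) \<partial>\<mu> (l + Suc n) w) \<partial>M)"
      proof (intro nn_integral_mono)
        fix w assume w: "w \<in> space M"
        show "(\<integral>\<^sup>+ y. ennreal (F y) \<partial>(T (Suc n) w)) \<le> (\<Sum>l. \<integral>\<^sup>+y. ennreal (F y) \<partial>\<mu> (l + Suc n) w)"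
        proof (cases "w \<in> Gd")
          case True
          then show ?thesis unfolding T_def using nn_integral_summ[of "\<lambda>l. \<mu> (l + Suc n) w", OF _ Fm] ms[OF w] by simp
        qed (simp add: T_def)
      qed
      also have "\<dots> = (\<Sum>l. a (l + Suc n))"
        unfolding a_def by (rule nn_integral_suminf) (rule mF)
      also have "\<dots> \<le> ennreal (c' ^ Suc n * S)" by (rule atail)
      finally show "(\<integral>\<^sup>+ w. (\<integral>\<^sup>+ y. ennreal (F y) \<partial>(T (Suc n) w)) \<partial>M) \<le> ennreal (c' ^ Suc n * S)" .
    qed
    have t: "(\<lambda>n. c' ^ Suc n) \<longlonglongrightarrow> 0"
      using c'0 c'1 by (intro LIMSEQ_Suc LIMSEQ_power_zero) simp
    have "(\<lambda>n. c' ^ Suc n * S) \<longlonglongrightarrow> 0 * S"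
      by (rule tendsto_mult[OF t tendsto_const])
    then have "(\<lambda>n. ennreal (c' ^ Suc n * S)) \<longlonglongrightarrow> ennreal (0 * S)"
      by (rule tendsto_ennrealI)
    then show "(\<lambda>n. ennreal (c' ^ Suc n * S)) \<longlonglongrightarrow> 0"
      by simp
  qed simp
  show "\<exists>\<mu>inf \<nu>. random_measure M \<mu>inf \<and>
              (\<forall>w\<in>space M. sigma_finite_measure (\<mu>inf w)) \<and>
              (\<forall>n. random_measure M (\<nu> n)) \<and>
              (\<forall>n. AE w in M. \<forall>A\<in>sets borel.
                   emeasure (\<mu>inf w) A = (\<Sum>l\<le>n. emeasure (\<mu> l w) A) + emeasure (\<nu> n w) A) \<and>
              (\<lambda>n. \<integral>\<^sup>+ w. (\<integral>\<^sup>+ y. ennreal (F y) \<partial>(\<nu> n w)) \<partial>M) \<longlonglongrightarrow> 0"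
    by (intro exI[of _ "T 0"] exI[of _ "\<lambda>n. T (Suc n)"] conjI allI ballI Trm Tsf eqs lim)
qed


end
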